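(* Let $Y\subseteq\omega$ and let $X\subseteq\omega$ be $\Delta^0_2(Y)$. Then there is a sequence of structures $(\mathcal C_i)_{i\in\omega}$, uniformly computable in $Y$, such that for every $i\in\omega$, $\mathcal C_i\cong\mathcal S_0$ if $i\in X$ and $\mathcal C_i\cong\mathcal S_1$ if $i\notin X$.
   Context: Let $\mathcal S=(2^\omega,(F_\nu)_{\nu\in 2^{<\omega}},(R_\nu)_{\nu\in2^{<\omega}})$ where $F_\nu(\sigma)(x)=\sigma(x)+\nu(x)\bmod 2$ (with $\nu(x)=0$ for $x\ge|\nu|$) and $R_\nu(\sigma)$ holds iff $\nu$ is an initial segment of $\sigma$. Let $\hat{\mathcal S}_0$, $\hat{\mathcal S}_1$ be the substructures of $\mathcal S$ generated by the constant sequence $\bar0$, resp. $\bar1$, and let $\mathcal S_0,\mathcal S_1$ be their relational versions obtained by replacing each unary function $F_\nu$ by its graph, a binary relation $graph_{F_\nu}$. Structures have universe $\omega$. *)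

theory Defs
  imports Main
begin

text \<open>A function of arity n is represented as nat list => nat; only its values
on lists of length n matter.\<close>

fun prec :: "(nat list \<Rightarrow> nat) \<Rightarrow> (nat list \<Rightarrow> nat) \<Rightarrow> nat list \<Rightarrow> nat" where
  "prec f g [] = 0"
| "prec f g (0 # xs) = f xs"
| "prec f g (Suc k # xs) = g (k # prec f g (k # xs) # xs)"

inductive recfn :: "nat set \<Rightarrow> nat \<Rightarrow> (nat list \<Rightarrow> nat) \<Rightarrow> bool" for Y :: "nat set" where
  zero: "recfn Y n (\<lambda>_. 0)"
| succ: "recfn Y 1 (\<lambda>xs. Suc (hd xs))"
| proj: "i < n \<Longrightarrow> recfn Y n (\<lambda>xs. xs ! i)"
| orac: "recfn Y 1 (\<lambda>xs. if hd xs \<in> Y then 1 else 0)"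
| compose: "recfn Y m f \<Longrightarrow> length gs = m \<Longrightarrow> (\<forall>g\<in>set gs. recfn Y n g)
          \<Longrightarrow> recfn Y n (\<lambda>xs. f (map (\<lambda>g. g xs) gs))"
| prim_rec: "recfn Y n f \<Longrightarrow> recfn Y (Suc (Suc n)) g \<Longrightarrow> recfn Y (Suc n) (prec f g)"
| minimize: "recfn Y (Suc n) f \<Longrightarrow> (\<forall>xs. length xs = n \<longrightarrow> (\<exists>k. f (k # xs) = 0))
          \<Longrightarrow> recfn Y n (\<lambda>xs. LEAST k. f (k # xs) = 0)"
| extens: "recfn Y n f \<Longrightarrow> (\<forall>xs. length xs = n \<longrightarrow> g xs = f xs) \<Longrightarrow> recfn Y n g"

definition computable_rel :: "nat set \<Rightarrow> nat \<Rightarrow> (nat list \<Rightarrow> bool) \<Rightarrow> bool" where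
  "computable_rel Y n P \<longleftrightarrow> recfn Y n (\<lambda>xs. if P xs then 1 else 0)"

definition Sigma2 :: "nat set \<Rightarrow> nat set \<Rightarrow> bool" where
  "Sigma2 Y X \<longleftrightarrow> (\<exists>R. computable_rel Y 3 R \<and>
      (\<forall>n. n \<in> X \<longleftrightarrow> (\<exists>a. \<forall>b. R [n, a, b])))"

definition Pi2 :: "nat set \<Rightarrow> nat set \<Rightarrow> bool" where
  "Pi2 Y X \<longleftrightarrow> Sigma2 Y (- X)"

definition Delta2 :: "nat set \<Rightarrow> nat set \<Rightarrow> bool" where
  "Delta2 Y X \<longleftrightarrow> Sigma2 Y X \<and> Pi2 Y X"

text \<open>Strings nu in 2^{<omega} are bool lists; sequences in 2^omega are nat => bool
  (True = 1).  Standard bijective coding of strings by natural numbers.\<close>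

fun str_code :: "bool list \<Rightarrow> nat" where
  "str_code [] = 0"
| "str_code (b # bs) = 2 * str_code bs + (if b then 2 else 1)"

definition nu_val :: "bool list \<Rightarrow> nat \<Rightarrow> bool" where
  "nu_val \<nu> x \<longleftrightarrow> x < length \<nu> \<and> \<nu> ! x"

definition F :: "bool list \<Rightarrow> (nat \<Rightarrow> bool) \<Rightarrow> (nat \<Rightarrow> bool)" where
  "F \<nu> \<sigma> = (\<lambda>x. \<sigma> x \<noteq> nu_val \<nu> x)"

definition R :: "bool list \<Rightarrow> (nat \<Rightarrow> bool) \<Rightarrow> bool" where
  "R \<nu> \<sigma> \<longleftrightarrow> (\<forall>x < length \<nu>. \<sigma> x = \<nu> ! x)"

inductive_set gen :: "bool \<Rightarrow> (nat \<Rightarrow> bool) set" for b :: bool where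
  base: "(\<lambda>_. b) \<in> gen b"
| step: "\<sigma> \<in> gen b \<Longrightarrow> F \<nu> \<sigma> \<in> gen b"

record 'a rstruct =
  univ :: "'a set"
  grel :: "bool list \<Rightarrow> 'a \<Rightarrow> 'a \<Rightarrow> bool"
  urel :: "bool list \<Rightarrow> 'a \<Rightarrow> bool"

text \<open>S_b: relational version of the substructure generated by the constant b
  (S_0 for b = False, S_1 for b = True).\<close>
definition S_rel :: "bool \<Rightarrow> (nat \<Rightarrow> bool) rstruct" where
  "S_rel b = \<lparr> univ = gen b,
              grel = (\<lambda>\<nu> \<sigma> \<tau>. \<sigma> \<in> gen b \<and> \<tau> \<in> gen b \<and> F \<nu> \<sigma> = \<tau>),
              urel = (\<lambda>\<nu> \<sigma>. \<sigma> \<in> gen b \<and> R \<nu> \<sigma>) \<rparr>"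

definition rstruct_iso :: "'a rstruct \<Rightarrow> 'b rstruct \<Rightarrow> bool" where
  "rstruct_iso A B \<longleftrightarrow> (\<exists>h. bij_betw h (univ A) (univ B) \<and>
     (\<forall>\<nu>. \<forall>a\<in>univ A. \<forall>a'\<in>univ A. grel A \<nu> a a' \<longleftrightarrow> grel B \<nu> (h a) (h a')) \<and>
     (\<forall>\<nu>. \<forall>a\<in>univ A. urel A \<nu> a \<longleftrightarrow> urel B \<nu> (h a)))"

text \<open>A sequence of structures with universe omega is uniformly Y-computable if
  its atomic diagrams are uniformly Y-computable (equality on omega being trivially
  decidable).\<close>
definition unif_computable :: "nat set \<Rightarrow> (nat \<Rightarrow> nat rstruct) \<Rightarrow> bool" where
  "unif_computable Y C \<longleftrightarrow> (\<forall>i. univ (C i) = UNIV) \<and>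
     (\<exists>P. computable_rel Y 4 P \<and>
        (\<forall>i \<nu> a a'. grel (C i) \<nu> a a' \<longleftrightarrow> P [i, str_code \<nu>, a, a'])) \<and>
     (\<exists>Q. computable_rel Y 3 Q \<and>
        (\<forall>i \<nu> a. urel (C i) \<nu> a \<longleftrightarrow> Q [i, str_code \<nu>, a]))"

end

theory Submission
  imports Defs
begin

context fixes Y :: "nat set" begin

lemma nth_Cons_one[simp]: "(x#xs)!1 = xs!0" by simp

lemmas rf = recfn.zero recfn.succ recfn.proj recfn.orac

lemma rf_ext: "recfn Y m f \<Longrightarrow> m = n \<Longrightarrow> (\<And>xs. length xs = n \<Longrightarrow> g xs = f xs) \<Longrightarrow> recfn Y n g"
  using recfn.extens by blast

lemma rf_comp: "recfn Y m f \<Longrightarrow> length gs = m \<Longrightarrow> (\<And>g. g \<in> set gs \<Longrightarrow> recfn Y n g)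
  \<Longrightarrow> recfn Y n (\<lambda>xs. f (map (\<lambda>g. g xs) gs))"
  using recfn.compose by blast

lemma rf_proj: "i < n \<Longrightarrow> recfn Y n (\<lambda>xs. xs!i)"
  by (rule recfn.proj)

lemma rf_comp1: "recfn Y 1 f \<Longrightarrow> recfn Y n ga \<Longrightarrow> recfn Y n (\<lambda>xs. f [ga xs])"
  using rf_comp[of 1 f "[ga]" n] by auto

lemma rf_comp2: "recfn Y 2 f \<Longrightarrow> recfn Y n ga \<Longrightarrow> recfn Y n gb \<Longrightarrow> recfn Y n (\<lambda>xs. f [ga xs, gb xs])"
  using rf_comp[of 2 f "[ga,gb]" n] by auto

lemma rf_comp3: "recfn Y 3 f \<Longrightarrow> recfn Y n ga \<Longrightarrow> recfn Y n gb \<Longrightarrow> recfn Y n gc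
   \<Longrightarrow> recfn Y n (\<lambda>xs. f [ga xs, gb xs, gc xs])"
  using rf_comp[of 3 f "[ga,gb,gc]" n] by (auto simp: numeral_3_eq_3)

lemma rf_const: "recfn Y n (\<lambda>_. c)"
proof (induction c)
  case 0 then show ?case by (rule recfn.zero)
next
  case (Suc c)
  have "recfn Y n (\<lambda>xs. Suc (hd [c]))"
    using rf_comp1[OF recfn.succ Suc] by simp
  then show ?case by simp
qed

lemma rf_prec: "recfn Y n f \<Longrightarrow> recfn Y m g \<Longrightarrow> m = Suc (Suc n) \<Longrightarrow> recfn Y (Suc n) (prec f g)"
  using recfn.prim_rec by blast

lemma rf_Suc: "recfn Y n g \<Longrightarrow> recfn Y n (\<lambda>xs. Suc (g xs))"
  using rf_comp1[OF recfn.succ, where n=n and ga=g] by simp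

lemma len1: "length xs = Suc 0 \<longleftrightarrow> (\<exists>a. xs = [a])"
  by (cases xs) auto
lemma len2: "length xs = 2 \<longleftrightarrow> (\<exists>a b. xs = [a,b])"
  by (cases xs; cases "tl xs") auto
lemma len3: "length xs = 3 \<longleftrightarrow> (\<exists>a b c. xs = [a,b,c])"
  by (cases xs; cases "tl xs"; cases "tl (tl xs)") (auto simp: numeral_3_eq_3)

lemma rf_pred: "recfn Y 1 (\<lambda>xs. xs!0 - 1)"
proof -
  have H: "recfn Y (Suc 0) (prec (\<lambda>_. 0) (\<lambda>xs. xs!0))"
    using rf_prec[OF rf_const[where n=0 and c=0] rf_proj[where i=0 and n=2, simplified]] by simp
  have Hv: "prec (\<lambda>_. 0) (\<lambda>xs. xs!0) [k] = k - 1" for k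
    by (cases k) auto
  show ?thesis
    by (rule rf_ext[OF H]) (simp, clarsimp simp: len1 Hv[simplified])
qed

lemma rf_cond: "recfn Y 3 (\<lambda>xs. if xs!0 = 0 then xs!1 else xs!2)"
proof -
  have H: "recfn Y (Suc 2) (prec (\<lambda>xs. xs!0) (\<lambda>xs. xs!3))"
    using rf_prec[OF rf_proj[where i=0 and n=2, simplified] rf_proj[where i=3 and n=4, simplified]] by simp
  have Hv: "prec (\<lambda>xs. xs!0) (\<lambda>xs. xs!3) [k, a, b] = (if k = 0 then a else b)" for k a b
    by (cases k) auto
  show ?thesis
    by (rule rf_ext[OF H]) (simp, clarsimp simp: len3 Hv[simplified])
qed

lemma rf_add: "recfn Y 2 (\<lambda>xs. xs!0 + xs!1)"
proof -
  have H: "recfn Y (Suc 1) (prec (\<lambda>xs. xs!0) (\<lambda>xs. Suc (xs!1)))"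
    using rf_prec[OF rf_proj[where i=0 and n=1, simplified] rf_Suc[OF rf_proj[where i=1 and n=3, simplified]]] by simp
  have Hv: "prec (\<lambda>xs. xs!0) (\<lambda>xs. Suc (xs!1)) [k, b] = k + b" for k b
    by (induction k) auto
  show ?thesis
    by (rule rf_ext[OF H]) (simp, clarsimp simp: len2 Hv[simplified])
qed

lemma rf_par: "recfn Y 1 (\<lambda>xs. xs!0 mod 2)"
proof -
  have g: "recfn Y 2 (\<lambda>xs. if xs!1 = 0 then 1 else 0)"
    using rf_comp3[OF rf_cond rf_proj[where i=1 and n=2, simplified] rf_const[where c=1] rf_const[where c=0]] by (simp cong: if_cong)
  have H: "recfn Y (Suc 0) (prec (\<lambda>_. 0) (\<lambda>xs. if xs!1 = 0 then 1 else 0))"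
    using rf_prec[OF rf_const[where n=0 and c=0] g] by simp
  have Hv: "prec (\<lambda>_. 0) (\<lambda>xs. if xs!1 = 0 then 1 else 0) [k] = k mod 2" for k
    by (induction k) (auto simp: mod_Suc)
  show ?thesis
    by (rule rf_ext[OF H]) (simp, clarsimp simp: len1 Hv[simplified])
qed

lemma rf_half: "recfn Y 1 (\<lambda>xs. xs!0 div 2)"
proof -
  have g: "recfn Y 2 (\<lambda>xs. xs!1 + xs!0 mod 2)"
    using rf_comp2[OF rf_add rf_proj[where i=1 and n=2, simplified] rf_comp1[OF rf_par rf_proj[where i=0 and n=2, simplified]]] by simp
  have H: "recfn Y (Suc 0) (prec (\<lambda>_. 0) (\<lambda>xs. xs!1 + xs!0 mod 2))"
    using rf_prec[OF rf_const[where n=0 and c=0] g] by simp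
  have Hv: "prec (\<lambda>_. 0) (\<lambda>xs. xs!1 + xs!0 mod 2) [k] = k div 2" for k
  proof (induction k)
    case (Suc k)
    have "Suc k div 2 = k div 2 + k mod 2" by presburger
    then show ?case using Suc by simp
  qed simp
  show ?thesis
    by (rule rf_ext[OF H]) (simp, clarsimp simp: len1 Hv[simplified])
qed

lemma rf_iter: "recfn Y 1 h \<Longrightarrow> recfn Y 2 (\<lambda>xs. ((\<lambda>a. h [a]) ^^ (xs!0)) (xs!1))"
proof -
  assume h: "recfn Y 1 h"
  have H: "recfn Y (Suc 1) (prec (\<lambda>xs. xs!0) (\<lambda>xs. h [xs!1]))"
    using rf_prec[OF rf_proj[where i=0 and n=1, simplified] rf_comp1[OF h rf_proj[where i=1 and n=3, simplified]]] by simp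
  have Hv: "prec (\<lambda>xs. xs!0) (\<lambda>xs. h [xs!1]) [k, b] = ((\<lambda>a. h [a]) ^^ k) b" for k b
    by (induction k) auto
  show ?thesis
    by (rule rf_ext[OF H]) (simp, clarsimp simp: len2 Hv[simplified])
qed

end


context fixes Y :: "nat set" begin

lemma cr_def': "computable_rel Y n P = recfn Y n (\<lambda>xs. if P xs then 1 else 0)"
  by (simp add: computable_rel_def)

lemma cr_ext: "computable_rel Y m P \<Longrightarrow> m = n \<Longrightarrow> (\<And>xs. length xs = n \<Longrightarrow> Q xs = P xs)
   \<Longrightarrow> computable_rel Y n Q"
  unfolding cr_def' by (erule rf_ext) auto

lemma cr_comp: "computable_rel Y m P \<Longrightarrow> length gs = m \<Longrightarrow> (\<And>g. g \<in> set gs \<Longrightarrow> recfn Y n g)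
  \<Longrightarrow> computable_rel Y n (\<lambda>xs. P (map (\<lambda>g. g xs) gs))"
  unfolding cr_def' using rf_comp[where Y=Y and m=m and f="\<lambda>xs. if P xs then 1 else 0" and gs=gs and n=n] by auto

lemma cr_reidx: "computable_rel Y m P \<Longrightarrow> length js = m \<Longrightarrow> (\<And>j. j \<in> set js \<Longrightarrow> j < n)
  \<Longrightarrow> computable_rel Y n (\<lambda>xs. P (map (\<lambda>j. xs!j) js))"
  using cr_comp[of m P "map (\<lambda>j xs. xs!j) js" n] by (auto intro: rf_proj simp: comp_def)

lemma cr_not: "computable_rel Y n P \<Longrightarrow> computable_rel Y n (\<lambda>xs. \<not> P xs)"
  unfolding cr_def'
  using rf_comp3[OF rf_cond, where Y=Y and n=n and ga="\<lambda>xs. if P xs then 1 else 0" and gb="\<lambda>_. 1" and gc="\<lambda>_. 0"]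
  by (rule rf_ext) (auto intro: rf_const cong: if_cong)

lemma cr_and: "computable_rel Y n P \<Longrightarrow> computable_rel Y n Q \<Longrightarrow> computable_rel Y n (\<lambda>xs. P xs \<and> Q xs)"
  unfolding cr_def'
  using rf_comp3[OF rf_cond, where Y=Y and n=n and ga="\<lambda>xs. if P xs then 1 else 0" and gb="\<lambda>_. 0" and gc="\<lambda>xs. if Q xs then 1 else 0"]
  by (rule rf_ext) (auto intro: rf_const cong: if_cong)

lemma cr_or: "computable_rel Y n P \<Longrightarrow> computable_rel Y n Q \<Longrightarrow> computable_rel Y n (\<lambda>xs. P xs \<or> Q xs)"
proof -
  assume a: "computable_rel Y n P" "computable_rel Y n Q"
  have "computable_rel Y n (\<lambda>xs. \<not> (\<not> P xs \<and> \<not> Q xs))"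
    by (intro cr_not cr_and a)
  then show ?thesis by simp
qed

lemma cr_imp: "computable_rel Y n P \<Longrightarrow> computable_rel Y n Q \<Longrightarrow> computable_rel Y n (\<lambda>xs. P xs \<longrightarrow> Q xs)"
proof -
  assume a: "computable_rel Y n P" "computable_rel Y n Q"
  have "computable_rel Y n (\<lambda>xs. \<not> P xs \<or> Q xs)"
    by (intro cr_not cr_or a)
  then show ?thesis by simp
qed

lemma cr_iff: "computable_rel Y n P \<Longrightarrow> computable_rel Y n Q \<Longrightarrow> computable_rel Y n (\<lambda>xs. P xs \<longleftrightarrow> Q xs)"
proof -
  assume a: "computable_rel Y n P" "computable_rel Y n Q"
  have "computable_rel Y n (\<lambda>xs. (P xs \<longrightarrow> Q xs) \<and> (Q xs \<longrightarrow> P xs))"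
    by (intro cr_and cr_imp a)
  then show ?thesis by (rule cr_ext) auto
qed

lemma cr_eq0: "recfn Y n f \<Longrightarrow> computable_rel Y n (\<lambda>xs. f xs = 0)"
  unfolding cr_def'
  using rf_comp3[OF rf_cond, where Y=Y and n=n and ga=f and gb="\<lambda>_. 1" and gc="\<lambda>_. 0"]
  by (rule rf_ext) (auto intro: rf_const cong: if_cong)

lemma map_nth_drop: "length ys = Suc (Suc n) \<Longrightarrow> map (\<lambda>j. ys!(Suc (Suc j))) [0..<n] = drop 2 ys"
  by (rule nth_equalityI) auto

lemma map_nth_n: "length xs = n \<Longrightarrow> map ((!) xs) [0..<n] = xs"
  using map_nth by blast

lemma cr_ball: "computable_rel Y (Suc n) P \<Longrightarrow> recfn Y n b \<Longrightarrow>
   computable_rel Y n (\<lambda>xs. \<forall>x<b xs. P (x#xs))"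
proof -
  assume P: "computable_rel Y (Suc n) P" and b: "recfn Y n b"
  define c where "c = (\<lambda>xs. if P xs then 1 else 0::nat)"
  have c: "recfn Y (Suc n) c" using P unfolding cr_def' c_def .
  have c2: "recfn Y (Suc (Suc n)) (\<lambda>ys. c (ys!0 # drop 2 ys))"
  proof -
    have "recfn Y (Suc (Suc n)) (\<lambda>ys. c (map (\<lambda>g. g ys) (map (\<lambda>j ys. ys!j) (0 # map (\<lambda>j. j+2) [0..<n]))))"
      by (rule rf_comp[OF c]) (auto intro: rf_proj)
    then show ?thesis
      by (rule rf_ext) (simp_all add: comp_def map_nth_drop)
  qed
  define g where "g = (\<lambda>ys. if ys!1 = 0 then 0 else c (ys!0 # drop 2 ys))"
  have g: "recfn Y (Suc (Suc n)) g"
    using rf_comp3[OF rf_cond rf_proj[where i=1 and n="Suc (Suc n)"] rf_const[where c=0] c2]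
    unfolding g_def by (simp cong: if_cong)
  have H: "recfn Y (Suc n) (prec (\<lambda>_. 1) g)"
    by (rule rf_prec[OF rf_const g]) simp
  have Hv: "prec (\<lambda>_. 1) g (k # xs) = (if \<forall>x<k. P (x#xs) then 1 else 0)" for k xs
    by (induction k) (auto simp: g_def c_def less_Suc_eq)
  have "recfn Y n (\<lambda>xs. prec (\<lambda>_. 1) g (map (\<lambda>g. g xs) (b # map (\<lambda>j xs. xs!j) [0..<n])))"
    by (rule rf_comp[OF H]) (auto intro: rf_proj b)
  then show ?thesis unfolding cr_def'
    by (rule rf_ext) (simp_all add: comp_def Hv[simplified] map_nth_n)
qed

lemma cr_bex: "computable_rel Y (Suc n) P \<Longrightarrow> recfn Y n b \<Longrightarrow>
   computable_rel Y n (\<lambda>xs. \<exists>x<b xs. P (x#xs))"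
proof -
  assume a: "computable_rel Y (Suc n) P" "recfn Y n b"
  have "computable_rel Y n (\<lambda>xs. \<not> (\<forall>x<b xs. \<not> P (x#xs)))"
    by (intro cr_not cr_ball a)
  then show ?thesis by simp
qed

end


definition alive :: "(nat list \<Rightarrow> bool) \<Rightarrow> nat \<Rightarrow> nat \<Rightarrow> nat \<Rightarrow> bool" where
  "alive Rr i a s \<longleftrightarrow> (\<forall>b<Suc s. Rr [i,a,b])"

definition Gp :: "(nat list \<Rightarrow> bool) \<Rightarrow> (nat list \<Rightarrow> bool) \<Rightarrow> nat \<Rightarrow> nat \<Rightarrow> bool" where
  "Gp R0 R1 i s \<longleftrightarrow> (\<exists>a<Suc s. alive R0 i a s \<and> (\<forall>a'<a. \<not> alive R1 i a' s))"

definition dt :: "nat \<Rightarrow> nat" where "dt n = (n - 1) div 2"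

definition Qrel :: "(nat list \<Rightarrow> bool) \<Rightarrow> (nat list \<Rightarrow> bool) \<Rightarrow> nat \<Rightarrow> nat \<Rightarrow> nat \<Rightarrow> bool" where
  "Qrel R0 R1 i n a \<longleftrightarrow> (\<forall>x<n. (dt^^x) n \<noteq> 0 \<longrightarrow>
      ((\<not> Gp R0 R1 i x \<noteq> bit a x) \<longleftrightarrow> (dt^^x) n mod 2 = 0))"

definition Prel :: "nat \<Rightarrow> nat \<Rightarrow> nat \<Rightarrow> bool" where
  "Prel n a a' \<longleftrightarrow> (\<forall>x<n + a + a'.
      ((bit a x \<noteq> ((dt^^x) n \<noteq> 0 \<and> (dt^^x) n mod 2 = 0)) \<longleftrightarrow> bit a' x))"

lemma half_pow: "((\<lambda>a::nat. a div 2) ^^ x) a = a div 2^x"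
proof (induction x)
  case (Suc x)
  have "a div 2^(Suc x) = a div 2^x div 2"
    by (metis div_mult2_eq power_Suc2)
  then show ?case using Suc by simp
qed simp

context fixes Y :: "nat set" begin

lemma cr_reidx': "computable_rel Y m P \<Longrightarrow> length js = m \<Longrightarrow> list_all (\<lambda>j. j < n) js
  \<Longrightarrow> computable_rel Y n (\<lambda>xs. P (map (\<lambda>j. xs!j) js))"
  by (rule cr_reidx) (auto simp: list_all_iff)

lemma cr_alive: "computable_rel Y 3 Rr \<Longrightarrow> computable_rel Y 3 (\<lambda>xs. alive Rr (xs!1) (xs!0) (xs!2))"
proof -
  assume Rr: "computable_rel Y 3 Rr"
  have P: "computable_rel Y 4 (\<lambda>ys. Rr [ys!2, ys!1, ys!0])"
    using cr_reidx'[where js="[2,1,0]" and n=4, OF Rr] by simp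
  have "computable_rel Y 3 (\<lambda>xs. \<forall>x<Suc (xs!2). Rr [(x#xs)!2, (x#xs)!1, (x#xs)!0])"
    by (rule cr_ball[where Y=Y and n=3, simplified, OF P]) (intro rf_Suc rf_proj, simp)
  then show ?thesis
    by (rule cr_ext) (auto simp: alive_def)
qed

lemma cr_G: "computable_rel Y 3 R0 \<Longrightarrow> computable_rel Y 3 R1 \<Longrightarrow>
  computable_rel Y 2 (\<lambda>xs. Gp R0 R1 (xs!0) (xs!1))"
proof -
  assume R0: "computable_rel Y 3 R0" and R1: "computable_rel Y 3 R1"
  have A1: "computable_rel Y 4 (\<lambda>ys. alive R1 (ys!2) (ys!0) (ys!3))"
    using cr_reidx'[where js="[0,2,3]" and n=4, OF cr_alive[OF R1]] by simp
  have B1: "computable_rel Y 3 (\<lambda>xs. \<forall>x<xs!0. \<not> alive R1 ((x#xs)!2) ((x#xs)!0) ((x#xs)!3))"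
    by (rule cr_ball[where Y=Y and n=3, simplified, OF cr_not[OF A1]]) (intro rf_proj, simp)
  have C: "computable_rel Y 3 (\<lambda>xs. alive R0 (xs!1) (xs!0) (xs!2) \<and>
         (\<forall>x<xs!0. \<not> alive R1 ((x#xs)!2) ((x#xs)!0) ((x#xs)!3)))"
    by (rule cr_and[OF cr_alive[OF R0] B1])
  have "computable_rel Y 2 (\<lambda>xs. \<exists>a<Suc (xs!1). alive R0 ((a#xs)!1) ((a#xs)!0) ((a#xs)!2) \<and>
         (\<forall>x<(a#xs)!0. \<not> alive R1 ((x#a#xs)!2) ((x#a#xs)!0) ((x#a#xs)!3)))"
    by (rule cr_bex[where Y=Y and n=2, simplified, OF C]) (intro rf_Suc rf_proj, simp)
  then show ?thesis
    by (rule cr_ext) (auto simp: Gp_def)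
qed

lemma rf_bitval: "recfn Y 2 (\<lambda>xs. (xs!1 div 2^(xs!0)) mod 2)"
proof -
  have "recfn Y 2 (\<lambda>xs. [((\<lambda>a. [a]!0 div 2) ^^ (xs!0)) (xs!1)] ! 0 mod 2)"
    by (rule rf_comp1[OF rf_par rf_iter[OF rf_half]])
  then show ?thesis
    by (rule rf_ext) (simp_all add: half_pow)
qed

lemma cr_bit: "computable_rel Y 2 (\<lambda>xs. bit (xs!1) (xs!0))"
  using cr_not[OF cr_eq0[OF rf_bitval]] by (rule cr_ext) (simp_all add: bit_iff_odd odd_iff_mod_2_eq_one)

lemma rf_dtiter: "recfn Y 2 (\<lambda>xs. (dt ^^ (xs!0)) (xs!1))"
proof -
  have "recfn Y 1 (\<lambda>xs. [xs!0 - 1] ! 0 div 2)"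
    by (rule rf_comp1[OF rf_half rf_pred])
  then have h: "recfn Y 1 (\<lambda>xs. dt (xs!0))"
    by (rule rf_ext) (simp_all add: dt_def)
  have "recfn Y 2 (\<lambda>xs. ((\<lambda>a. dt ([a]!0)) ^^ (xs!0)) (xs!1))"
    by (rule rf_iter[OF h])
  then show ?thesis by simp
qed

lemma cr_Q: "computable_rel Y 3 R0 \<Longrightarrow> computable_rel Y 3 R1 \<Longrightarrow>
  computable_rel Y 3 (\<lambda>xs. Qrel R0 R1 (xs!0) (xs!1) (xs!2))"
proof -
  assume R0: "computable_rel Y 3 R0" and R1: "computable_rel Y 3 R1"
  have D: "recfn Y 4 (\<lambda>ys. (dt^^(ys!0)) (ys!2))"
    using rf_comp2[OF rf_dtiter rf_proj[where i=0 and n=4] rf_proj[where i=2 and n=4]] by simp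
  have Dm: "recfn Y 4 (\<lambda>ys. (dt^^(ys!0)) (ys!2) mod 2)"
    using rf_comp1[OF rf_par D] by simp
  have Gx: "computable_rel Y 4 (\<lambda>ys. Gp R0 R1 (ys!1) (ys!0))"
    using cr_reidx'[where js="[1,0]" and n=4, OF cr_G[OF R0 R1]] by simp
  have Bx: "computable_rel Y 4 (\<lambda>ys. bit (ys!3) (ys!0))"
    using cr_reidx'[where js="[0,3]" and n=4, OF cr_bit] by simp
  have I: "computable_rel Y 4 (\<lambda>ys. (dt^^(ys!0)) (ys!2) \<noteq> 0 \<longrightarrow>
      ((\<not> Gp R0 R1 (ys!1) (ys!0) \<noteq> bit (ys!3) (ys!0)) \<longleftrightarrow> (dt^^(ys!0)) (ys!2) mod 2 = 0))"
    by (intro cr_imp cr_not cr_iff cr_eq0 Gx Bx D Dm)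
  have "computable_rel Y 3 (\<lambda>xs. \<forall>x<xs!1. (dt^^((x#xs)!0)) ((x#xs)!2) \<noteq> 0 \<longrightarrow>
      ((\<not> Gp R0 R1 ((x#xs)!1) ((x#xs)!0) \<noteq> bit ((x#xs)!3) ((x#xs)!0)) \<longleftrightarrow> (dt^^((x#xs)!0)) ((x#xs)!2) mod 2 = 0))"
    by (rule cr_ball[where Y=Y and n=3, simplified, OF I]) (intro rf_proj, simp)
  then show ?thesis
    by (rule cr_ext) (auto simp: Qrel_def)
qed

lemma cr_P: "computable_rel Y 4 (\<lambda>xs. Prel (xs!1) (xs!2) (xs!3))"
proof -
  have D: "recfn Y 5 (\<lambda>ys. (dt^^(ys!0)) (ys!2))"
    using rf_comp2[OF rf_dtiter rf_proj[where i=0 and n=5] rf_proj[where i=2 and n=5]] by simp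
  have Dm: "recfn Y 5 (\<lambda>ys. (dt^^(ys!0)) (ys!2) mod 2)"
    using rf_comp1[OF rf_par D] by simp
  have B3: "computable_rel Y 5 (\<lambda>ys. bit (ys!3) (ys!0))"
    using cr_reidx'[where js="[0,3]" and n=5, OF cr_bit] by simp
  have B4: "computable_rel Y 5 (\<lambda>ys. bit (ys!4) (ys!0))"
    using cr_reidx'[where js="[0,4]" and n=5, OF cr_bit] by simp
  have I: "computable_rel Y 5 (\<lambda>ys. (bit (ys!3) (ys!0) \<noteq> ((dt^^(ys!0)) (ys!2) \<noteq> 0 \<and> (dt^^(ys!0)) (ys!2) mod 2 = 0))
       \<longleftrightarrow> bit (ys!4) (ys!0))"
    by (intro cr_iff cr_not cr_and cr_eq0 B3 B4 D Dm)
  have bnd: "recfn Y 4 (\<lambda>xs. xs!1 + xs!2 + xs!3)"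
    using rf_comp2[OF rf_add rf_comp2[OF rf_add rf_proj[where i=1 and n=4] rf_proj[where i=2 and n=4]]
       rf_proj[where i=3 and n=4]] by simp
  have "computable_rel Y 4 (\<lambda>xs. \<forall>x<xs!1 + xs!2 + xs!3. (bit ((x#xs)!3) ((x#xs)!0) \<noteq> ((dt^^((x#xs)!0)) ((x#xs)!2) \<noteq> 0 \<and> (dt^^((x#xs)!0)) ((x#xs)!2) mod 2 = 0))
       \<longleftrightarrow> bit ((x#xs)!4) ((x#xs)!0))"
    by (rule cr_ball[where Y=Y and n=4, simplified, OF I bnd])
  then show ?thesis
    by (rule cr_ext) (auto simp: Prel_def)
qed

end


lemma dt_zero: "(dt^^x) 0 = 0"
  by (induction x) (auto simp: dt_def)

lemma dt_code: "dt (str_code (b # bs)) = str_code bs"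
  by (auto simp: dt_def)

lemma dec: "((dt^^x) (str_code \<nu>) \<noteq> 0 \<longleftrightarrow> x < length \<nu>) \<and>
   (x < length \<nu> \<longrightarrow> ((dt^^x) (str_code \<nu>) mod 2 = 0 \<longleftrightarrow> \<nu>!x))"
proof (induction \<nu> arbitrary: x)
  case Nil then show ?case by (simp add: dt_zero)
next
  case (Cons b bs)
  show ?case
  proof (cases x)
    case 0 then show ?thesis by auto
  next
    case (Suc y)
    have "(dt^^x) (str_code (b#bs)) = (dt^^y) (str_code bs)"
      unfolding Suc funpow_Suc_right o_apply dt_code ..
    then show ?thesis using Cons[of y] Suc by simp
  qed
qed

lemma len_le: "length \<nu> \<le> str_code \<nu>"
  by (induction \<nu>) auto

lemma bit_ge: "a \<le> x \<Longrightarrow> \<not> bit (a::nat) x"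
proof -
  assume "a \<le> x"
  then have "a < 2^x" using less_exp[of x] by linarith
  then show ?thesis by (simp add: bit_iff_odd)
qed

definition sig :: "(nat list \<Rightarrow> bool) \<Rightarrow> (nat list \<Rightarrow> bool) \<Rightarrow> nat \<Rightarrow> nat \<Rightarrow> nat \<Rightarrow> bool" where
  "sig R0 R1 i a = (\<lambda>x. (\<not> Gp R0 R1 i x) \<noteq> bit a x)"

lemma nuv: "((dt^^x) (str_code \<nu>) \<noteq> 0 \<and> (dt^^x) (str_code \<nu>) mod 2 = 0) \<longleftrightarrow> nu_val \<nu> x"
  using dec[of x \<nu>] by (auto simp: nu_val_def)

lemma grel_iff: "F \<nu> (sig R0 R1 i a) = sig R0 R1 i a' \<longleftrightarrow> Prel (str_code \<nu>) a a'"
proof -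
  have "F \<nu> (sig R0 R1 i a) = sig R0 R1 i a' \<longleftrightarrow> (\<forall>x. (bit a x \<noteq> nu_val \<nu> x) \<longleftrightarrow> bit a' x)"
    unfolding F_def sig_def fun_eq_iff by auto
  also have "\<dots> \<longleftrightarrow> (\<forall>x<str_code \<nu> + a + a'. (bit a x \<noteq> nu_val \<nu> x) \<longleftrightarrow> bit a' x)"
  proof (rule iffI)
    assume "\<forall>x. (bit a x \<noteq> nu_val \<nu> x) \<longleftrightarrow> bit a' x"
    then show "\<forall>x<str_code \<nu> + a + a'. (bit a x \<noteq> nu_val \<nu> x) \<longleftrightarrow> bit a' x" by blast
  next
    assume H: "\<forall>x<str_code \<nu> + a + a'. (bit a x \<noteq> nu_val \<nu> x) \<longleftrightarrow> bit a' x"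
    show "\<forall>x. (bit a x \<noteq> nu_val \<nu> x) \<longleftrightarrow> bit a' x"
    proof (rule allI)
    fix x
    show "(bit a x \<noteq> nu_val \<nu> x) \<longleftrightarrow> bit a' x"
    proof (cases "x < str_code \<nu> + a + a'")
      case True then show ?thesis using H by blast
    next
      case False
      then have "\<not> bit a x" "\<not> bit a' x" "\<not> nu_val \<nu> x"
        using bit_ge[of a x] bit_ge[of a' x] len_le[of \<nu>] by (auto simp: nu_val_def)
      then show ?thesis by simp
    qed
    qed
  qed
  also have "\<dots> \<longleftrightarrow> Prel (str_code \<nu>) a a'"
    unfolding Prel_def nuv ..
  finally show ?thesis .
qed

lemma urel_iff: "R \<nu> (sig R0 R1 i a) \<longleftrightarrow> Qrel R0 R1 i (str_code \<nu>) a"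
proof -
  have "Qrel R0 R1 i (str_code \<nu>) a \<longleftrightarrow> (\<forall>x<str_code \<nu>. x < length \<nu> \<longrightarrow> (sig R0 R1 i a x \<longleftrightarrow> \<nu>!x))"
    unfolding Qrel_def sig_def using dec by metis
  also have "\<dots> \<longleftrightarrow> (\<forall>x<length \<nu>. sig R0 R1 i a x \<longleftrightarrow> \<nu>!x)"
    using len_le[of \<nu>] by auto
  finally show ?thesis unfolding R_def by simp
qed

lemma gen_fin: "\<sigma> \<in> gen b \<Longrightarrow> finite {x. \<sigma> x \<noteq> b}"
proof (induction rule: gen.induct)
  case base then show ?case by simp
next
  case (step \<sigma> \<nu>)
  have "{x. F \<nu> \<sigma> x \<noteq> b} \<subseteq> {x. \<sigma> x \<noteq> b} \<union> {..<length \<nu>}"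
    by (auto simp: F_def nu_val_def)
  then show ?case using step finite_subset by blast
qed

lemma fin_gen: "finite D \<Longrightarrow> {x. \<sigma> x \<noteq> b} = D \<Longrightarrow> \<sigma> \<in> gen b"
proof (induction D arbitrary: \<sigma> rule: finite_induct)
  case empty
  then have "\<sigma> = (\<lambda>_. b)" by auto
  then show ?case using gen.base by simp
next
  case (insert y D)
  define \<tau> where "\<tau> = \<sigma>(y := b)"
  have "{x. \<tau> x \<noteq> b} = D" using insert by (auto simp: \<tau>_def)
  then have t: "\<tau> \<in> gen b" using insert by blast
  define \<nu> where "\<nu> = replicate y False @ [True]"
  have nv: "nu_val \<nu> x \<longleftrightarrow> x = y" for x
    by (auto simp: nu_val_def \<nu>_def nth_append)
  have "\<sigma> y \<noteq> b" using insert by auto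
  then have "F \<nu> \<tau> = \<sigma>"
    by (auto simp: F_def nv \<tau>_def fun_eq_iff)
  then show ?case using gen.step[OF t] by metis
qed

lemma gen_char: "\<sigma> \<in> gen b \<longleftrightarrow> finite {x. \<sigma> x \<noteq> b}"
  using gen_fin fin_gen by blast

lemma fin_bits: "finite D \<Longrightarrow> \<exists>a::nat. \<forall>x. bit a x \<longleftrightarrow> x \<in> D"
proof (induction D rule: finite_induct)
  case empty then show ?case by (intro exI[of _ 0]) simp
next
  case (insert y D)
  then obtain a :: nat where "\<forall>x. bit a x \<longleftrightarrow> x \<in> D" by blast
  then show ?case by (intro exI[of _ "or a (2^y)"]) (auto simp: bit_or_iff bit_exp_iff)
qed

definition Cst :: "(nat list \<Rightarrow> bool) \<Rightarrow> (nat list \<Rightarrow> bool) \<Rightarrow> nat \<Rightarrow> nat rstruct" where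
  "Cst R0 R1 i = \<lparr> univ = UNIV,
      grel = (\<lambda>\<nu> a a'. F \<nu> (sig R0 R1 i a) = sig R0 R1 i a'),
      urel = (\<lambda>\<nu> a. R \<nu> (sig R0 R1 i a)) \<rparr>"

lemma iso:
  assumes ev: "\<forall>x\<ge>N. (\<not> Gp R0 R1 i x) = b"
  shows "rstruct_iso (Cst R0 R1 i) (S_rel b)"
proof -
  let ?h = "sig R0 R1 i"
  have inj: "inj ?h"
  proof (rule injI)
    fix a a' assume "?h a = ?h a'"
    then have "bit a x = bit a' x" for x unfolding sig_def fun_eq_iff by metis
    then show "a = a'" by (simp add: bit_eq_iff)
  qed
  have img: "?h a \<in> gen b" for a
  proof -
    have "{x. ?h a x \<noteq> b} \<subseteq> {..<N + a}"
    proof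
      fix x assume "x \<in> {x. ?h a x \<noteq> b}"
      then show "x \<in> {..<N + a}" using ev bit_ge[of a x] unfolding sig_def
        by (cases "N + a \<le> x") auto
    qed
    then show ?thesis unfolding gen_char using finite_subset by blast
  qed
  have surj: "\<sigma> \<in> range ?h" if s: "\<sigma> \<in> gen b" for \<sigma>
  proof -
    have "{x. \<sigma> x \<noteq> (\<not> Gp R0 R1 i x)} \<subseteq> {x. \<sigma> x \<noteq> b} \<union> {..<N}"
      using ev by auto
    moreover have "finite ({x. \<sigma> x \<noteq> b} \<union> {..<N})" using s gen_char by auto
    ultimately have "finite {x. \<sigma> x \<noteq> (\<not> Gp R0 R1 i x)}" using finite_subset by blast
    then obtain a :: nat where a: "\<forall>x. bit a x \<longleftrightarrow> x \<in> {x. \<sigma> x \<noteq> (\<not> Gp R0 R1 i x)}"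
      using fin_bits by blast
    have "?h a = \<sigma>" unfolding sig_def fun_eq_iff using a by auto
    then show ?thesis by blast
  qed
  have bij: "bij_betw ?h UNIV (gen b)"
    unfolding bij_betw_def using inj img surj by blast
  show ?thesis
    unfolding rstruct_iso_def
    by (rule exI[of _ ?h]) (simp add: bij Cst_def S_rel_def img)
qed

lemma lim_in:
  assumes H0: "\<forall>n. n \<in> X \<longleftrightarrow> (\<exists>a. \<forall>b. R0 [n,a,b])"
    and H1: "\<forall>n. n \<in> - X \<longleftrightarrow> (\<exists>a. \<forall>b. R1 [n,a,b])"
    and i: "i \<in> X"
  shows "\<exists>N. \<forall>s\<ge>N. Gp R0 R1 i s"
proof -
  obtain a0 where A: "\<forall>b. R0 [i,a0,b]" using H0 i by blast
  have nw: "\<exists>b. \<not> R1 [i,a',b]" for a' using H1 i by auto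
  have "\<forall>a'\<in>{..<a0}. eventually (\<lambda>s. \<not> alive R1 i a' s) sequentially"
  proof
    fix a' obtain b where "\<not> R1 [i,a',b]" using nw by blast
    then show "eventually (\<lambda>s. \<not> alive R1 i a' s) sequentially"
      unfolding eventually_sequentially alive_def
      by (intro exI[of _ b]) (auto simp: less_Suc_eq_le)
  qed
  then have "eventually (\<lambda>s. \<forall>a'\<in>{..<a0}. \<not> alive R1 i a' s) sequentially"
    by (rule eventually_ball_finite[rotated]) simp
  moreover have "eventually (\<lambda>s. a0 \<le> s) sequentially" by simp
  ultimately have "eventually (\<lambda>s. Gp R0 R1 i s) sequentially"
  proof eventually_elim
    case (elim s)
    then show ?case unfolding Gp_def using A
      by (intro exI[of _ a0]) (auto simp: alive_def)
  qed
  then show ?thesis unfolding eventually_sequentially .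
qed

lemma lim_out:
  assumes H0: "\<forall>n. n \<in> X \<longleftrightarrow> (\<exists>a. \<forall>b. R0 [n,a,b])"
    and H1: "\<forall>n. n \<in> - X \<longleftrightarrow> (\<exists>a. \<forall>b. R1 [n,a,b])"
    and i: "i \<notin> X"
  shows "\<exists>N. \<forall>s\<ge>N. \<not> Gp R0 R1 i s"
proof -
  obtain a1 where A: "\<forall>b. R1 [i,a1,b]" using H1 i by blast
  have nw: "\<exists>b. \<not> R0 [i,a',b]" for a' using H0 i by auto
  have "\<forall>a'\<in>{..a1}. eventually (\<lambda>s. \<not> alive R0 i a' s) sequentially"
  proof
    fix a' obtain b where "\<not> R0 [i,a',b]" using nw by blast
    then show "eventually (\<lambda>s. \<not> alive R0 i a' s) sequentially"
      unfolding eventually_sequentially alive_def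
      by (intro exI[of _ b]) (auto simp: less_Suc_eq_le)
  qed
  then have "eventually (\<lambda>s. \<forall>a'\<in>{..a1}. \<not> alive R0 i a' s) sequentially"
    by (rule eventually_ball_finite[rotated]) simp
  then have "eventually (\<lambda>s. \<not> Gp R0 R1 i s) sequentially"
  proof eventually_elim
    case (elim s)
    show ?case
    proof
      assume "Gp R0 R1 i s"
      then obtain a where a: "alive R0 i a s" "\<forall>a'<a. \<not> alive R1 i a' s"
        unfolding Gp_def by blast
      show False
      proof (cases "a \<le> a1")
        case True then show False using elim a by auto
      next
        case False
        then have "alive R1 i a1 s" using A by (simp add: alive_def)
        then show False using a False by auto
      qed
    qed
  qed
  then show ?thesis unfolding eventually_sequentially .
qed

theorem lemma4p7:
  fixes Y X :: "nat set"
  assumes "Delta2 Y X"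
  shows "\<exists>C :: nat \<Rightarrow> nat rstruct. unif_computable Y C \<and>
           (\<forall>i. (i \<in> X \<longrightarrow> rstruct_iso (C i) (S_rel False)) \<and>
                (i \<notin> X \<longrightarrow> rstruct_iso (C i) (S_rel True)))"
proof -
  obtain R0 where R0: "computable_rel Y 3 R0" and H0: "\<forall>n. n \<in> X \<longleftrightarrow> (\<exists>a. \<forall>b. R0 [n,a,b])"
    using assms unfolding Delta2_def Sigma2_def by blast
  obtain R1 where R1: "computable_rel Y 3 R1" and H1: "\<forall>n. n \<in> - X \<longleftrightarrow> (\<exists>a. \<forall>b. R1 [n,a,b])"
    using assms unfolding Delta2_def Pi2_def Sigma2_def by blast
  have uc: "unif_computable Y (Cst R0 R1)"
    unfolding unif_computable_def
  proof (intro conjI allI exI)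
    show "univ (Cst R0 R1 i) = UNIV" for i by (simp add: Cst_def)
    show "computable_rel Y 4 (\<lambda>xs. Prel (xs!1) (xs!2) (xs!3))" by (rule cr_P)
    show "grel (Cst R0 R1 i) \<nu> a a' \<longleftrightarrow> Prel ([i, str_code \<nu>, a, a']!1) ([i, str_code \<nu>, a, a']!2) ([i, str_code \<nu>, a, a']!3)"
      for i \<nu> a a' by (simp add: Cst_def grel_iff)
    show "computable_rel Y 3 (\<lambda>xs. Qrel R0 R1 (xs!0) (xs!1) (xs!2))" by (rule cr_Q[OF R0 R1])
    show "urel (Cst R0 R1 i) \<nu> a \<longleftrightarrow> Qrel R0 R1 ([i, str_code \<nu>, a]!0) ([i, str_code \<nu>, a]!1) ([i, str_code \<nu>, a]!2)"
      for i \<nu> a by (simp add: Cst_def urel_iff)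
  qed
  have isos: "(i \<in> X \<longrightarrow> rstruct_iso (Cst R0 R1 i) (S_rel False)) \<and>
                (i \<notin> X \<longrightarrow> rstruct_iso (Cst R0 R1 i) (S_rel True))" for i
  proof (intro conjI impI)
    assume "i \<in> X"
    then obtain N where "\<forall>s\<ge>N. Gp R0 R1 i s" using lim_in[OF H0 H1] by blast
    then have "\<forall>x\<ge>N. (\<not> Gp R0 R1 i x) = False" by simp
    then show "rstruct_iso (Cst R0 R1 i) (S_rel False)" by (rule iso)
  next
    assume "i \<notin> X"
    then obtain N where "\<forall>s\<ge>N. \<not> Gp R0 R1 i s" using lim_out[OF H0 H1] by blast
    then have "\<forall>x\<ge>N. (\<not> Gp R0 R1 i x) = True" by simp
    then show "rstruct_iso (Cst R0 R1 i) (S_rel True)" by (rule iso)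
  qed
  show ?thesis using uc isos by blast
qed


end
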